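(* For every $\alpha$-formula $\alpha$ with components $\alpha_1,\alpha_2$, the formula $\alpha\leftrightarrow\alpha_1\wedge\alpha_2$ is valid (where, if $\alpha$ has only one component, $\alpha_1\wedge\alpha_2$ means $\alpha_1$), and for every $\beta$-formula $\beta$ with components $\beta_1,\beta_2$, the formula $\beta\leftrightarrow\beta_1\vee\beta_2$ is valid.
   Context: $\tau$PDL syntax: formulas $\varphi::=p\mid\neg\varphi\mid\forall A.\varphi\mid\mathsf C_\imath A$, programs $A::=a\mid\varphi\mid\varphi\Rightarrow\varphi\mid AA\mid A+A\mid A^*$ ($p$ atomic formula, $a$ atomic program, $\imath$ agent), interpreted in $\mathcal L$-models by the standard relational semantics of $\tau$PDL: $\forall A.\varphi$ is the box $[A]\varphi$, tests $\varphi$ denote $\{(w,w):w\models\varphi\}$, $\to_{AB}=\to_A\circ\to_B$, $\to_{A+B}=\to_A\cup\to_B$, $\to_{A^*}$ is the reflexive-transitive closure, $\to_{\varphi\Rightarrow\psi}=\bigcup\{\to_A: A\in\Sigma^+,\forall w\models\varphi\,\forall w'(w\to_Aw'\Rightarrow w'\models\psi)\}$ with $\Sigma^+$ the finite nonempty compositions of atomic programs, tests and $\varphi\Rightarrow\psi$ terms; capabilities: $w\models\mathsf C_\imath a$ iff $\to_a\subseteq\imath^M(w)$, $\mathsf C_\imath\varphi$ always true, $w\models\mathsf C_\imath(\varphi\Rightarrow\psi)$ iff $\to_{\varphi\Rightarrow\psi}\subseteq\imath^M(w)$, $\mathsf C_\imath(AB)$ true at $w$ iff $w\models\mathsf C_\imath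 A$ and every $A$-successor satisfies $\mathsf C_\imath B$, $[\![\mathsf C_\imath(A+B)]\!]=[\![\mathsf C_\imath A]\!]\cap[\![\mathsf C_\imath B]\!]$, $[\![\mathsf C_\imath A^*]\!]=\bigcup\{[\![\varphi]\!]:[\![\varphi]\!]\subseteq[\![\mathsf C_\imath A]\!]\cap[\![\forall A.\varphi]\!]\}$; and the normality condition $\imath^M(w)=\bigcup\{\to_{\varphi\Rightarrow\psi}:w\models\mathsf C_\imath(\varphi\Rightarrow\psi)\}\cup\bigcup\{\to_a:w\models\mathsf C_\imath a\}$. $\mathsf{tt}$ is a tautology, $\Omega:=\mathsf{tt}\Rightarrow\mathsf{tt}$; $\wedge,\vee$ are the usual abbreviations. $\alpha$-formulas and their components $(\alpha_1;\alpha_2)$: $\neg\neg\varphi:(\varphi)$; $\neg\forall\psi.\varphi:(\neg\varphi;\psi)$; $\forall AB.\varphi:(\forall A.\forall B.\varphi)$; $\neg\forall AB.\varphi:(\neg\forall A.\forall B.\varphi)$; $\forall(A+B).\varphi:(\forall A.\varphi;\forall B.\varphi)$; $\forall A^*.\varphi:(\varphi;\forall A.\forall A^*.\varphi)$; $\mathsf C_\imath(AB):(\mathsf C_\imath A;\forall A.\mathsf C_\imath B)$; $\mathsf C_\imath(A+B):(\mathsf C_\imath A;\mathsf C_\imath B)$; $\mathsf C_\imath(A^* ):(\forall A^*.\mathsf C_\imath A)$; $\neg\mathsf C_\imath(A^* ):(\neg\forall A^*.\mathsf C_\imath A)$. $\beta$-formulas and components $(\beta_1;\beta_2)$: $\forall\psi.\varphi:(\neg\psi;\varphi)$;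 $\forall(\varphi\Rightarrow\psi).\vartheta:(\varphi\wedge\forall\Omega^*.\forall\psi.\vartheta;\ \forall\Omega^*.\vartheta)$; $\neg\forall(\varphi\Rightarrow\psi).\vartheta:(\neg\forall(\neg\varphi).\forall\Omega.\vartheta;\ \neg\forall\Omega.\forall\psi.\vartheta)$; $\neg\forall(A+B).\varphi:(\neg\forall A.\varphi;\neg\forall B.\varphi)$; $\neg\forall A^*.\varphi:(\neg\varphi;\neg\forall A.\forall A^*.\varphi)$; $\neg\mathsf C_\imath(AB):(\neg\mathsf C_\imath A;\neg\forall A.\mathsf C_\imath B)$; $\neg\mathsf C_\imath(A+B):(\neg\mathsf C_\imath A;\neg\mathsf C_\imath B)$. A formula is valid if true at every state of every $\mathcal L$-model. *)

theory Defs
  imports Main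
begin

datatype ('p,'a,'i) form =
    Atom 'p
  | Neg "('p,'a,'i) form"
  | Box "('p,'a,'i) prog" "('p,'a,'i) form"
  | Cap 'i "('p,'a,'i) prog"
and ('p,'a,'i) prog =
    Atomic 'a
  | Test "('p,'a,'i) form"
  | PImp "('p,'a,'i) form" "('p,'a,'i) form"
  | Seq "('p,'a,'i) prog" "('p,'a,'i) prog"
  | Choice "('p,'a,'i) prog" "('p,'a,'i) prog"
  | Star "('p,'a,'i) prog"

definition Impl :: "('p,'a,'i) form \<Rightarrow> ('p,'a,'i) form \<Rightarrow> ('p,'a,'i) form" where
  "Impl \<phi> \<psi> = Box (Test \<phi>) \<psi>"

definition Conj :: "('p,'a,'i) form \<Rightarrow> ('p,'a,'i) form \<Rightarrow> ('p,'a,'i) form" where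
  "Conj \<phi> \<psi> = Neg (Box (Test \<phi>) (Neg \<psi>))"

definition Disj :: "('p,'a,'i) form \<Rightarrow> ('p,'a,'i) form \<Rightarrow> ('p,'a,'i) form" where
  "Disj \<phi> \<psi> = Box (Test (Neg \<phi>)) \<psi>"

definition Iff :: "('p,'a,'i) form \<Rightarrow> ('p,'a,'i) form \<Rightarrow> ('p,'a,'i) form" where
  "Iff \<phi> \<psi> = Conj (Impl \<phi> \<psi>) (Impl \<psi> \<phi>)"

definition tt :: "('p,'a,'i) form" where
  "tt = Impl (Atom undefined) (Atom undefined)"

definition Omega :: "('p,'a,'i) prog" where
  "Omega = PImp tt tt"

inductive_set sigma_plus :: "('p,'a,'i) prog set" where
  sp_atomic: "Atomic a \<in> sigma_plus"
| sp_test: "Test \<phi> \<in> sigma_plus"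
| sp_imp: "PImp \<phi> \<psi> \<in> sigma_plus"
| sp_seq: "A \<in> sigma_plus \<Longrightarrow> B \<in> sigma_plus \<Longrightarrow> Seq A B \<in> sigma_plus"

text \<open>Because the semantics of =>-terms and of
  C_i(A*) is impredicative, a model carries the truth sets of all formulas (tr) and the
  relations of all =>-terms (rimp); an L-model is one where these satisfy the semantic clauses
  and the normality condition.\<close>

record ('s,'p,'a,'i) model =
  val  :: "'p \<Rightarrow> 's set"
  ra   :: "'a \<Rightarrow> ('s \<times> 's) set"
  cap  :: "'i \<Rightarrow> 's \<Rightarrow> ('s \<times> 's) set"
  tr   :: "('p,'a,'i) form \<Rightarrow> 's set"
  rimp :: "('p,'a,'i) form \<Rightarrow> ('p,'a,'i) form \<Rightarrow> ('s \<times> 's) set"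

primrec rel :: "('s,'p,'a,'i) model \<Rightarrow> ('p,'a,'i) prog \<Rightarrow> ('s \<times> 's) set" where
  "rel M (Atomic a) = ra M a"
| "rel M (Test \<phi>) = {(w, w) | w. w \<in> tr M \<phi>}"
| "rel M (PImp \<phi> \<psi>) = rimp M \<phi> \<psi>"
| "rel M (Seq A B) = rel M A O rel M B"
| "rel M (Choice A B) = rel M A \<union> rel M B"
| "rel M (Star A) = (rel M A)\<^sup>*"

primrec capsem :: "('s,'p,'a,'i) model \<Rightarrow> 'i \<Rightarrow> ('p,'a,'i) prog \<Rightarrow> 's set" where
  "capsem M i (Atomic a) = {w. ra M a \<subseteq> cap M i w}"
| "capsem M i (Test \<phi>) = UNIV"
| "capsem M i (PImp \<phi> \<psi>) = {w. rimp M \<phi> \<psi> \<subseteq> cap M i w}"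
| "capsem M i (Seq A B) =
     {w. w \<in> capsem M i A \<and> (\<forall>v. (w, v) \<in> rel M A \<longrightarrow> v \<in> capsem M i B)}"
| "capsem M i (Choice A B) = capsem M i A \<inter> capsem M i B"
| "capsem M i (Star A) =
     \<Union>{tr M \<phi> | \<phi>. tr M \<phi> \<subseteq> capsem M i A \<inter> tr M (Box A \<phi>)}"

definition safe :: "('s,'p,'a,'i) model \<Rightarrow> ('p,'a,'i) form \<Rightarrow> ('p,'a,'i) form \<Rightarrow> ('p,'a,'i) prog \<Rightarrow> bool" where
  "safe M \<phi> \<psi> A \<longleftrightarrow> (\<forall>w \<in> tr M \<phi>. \<forall>v. (w, v) \<in> rel M A \<longrightarrow> v \<in> tr M \<psi>)"

definition Lmodel :: "('s,'p,'a,'i) model \<Rightarrow> bool" where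
  "Lmodel M \<longleftrightarrow>
     (\<forall>p. tr M (Atom p) = val M p) \<and>
     (\<forall>\<phi>. tr M (Neg \<phi>) = - tr M \<phi>) \<and>
     (\<forall>A \<phi>. tr M (Box A \<phi>) = {w. \<forall>v. (w, v) \<in> rel M A \<longrightarrow> v \<in> tr M \<phi>}) \<and>
     (\<forall>i A. tr M (Cap i A) = capsem M i A) \<and>
     (\<forall>\<phi> \<psi>. rimp M \<phi> \<psi> = \<Union>{rel M A | A. A \<in> sigma_plus \<and> safe M \<phi> \<psi> A}) \<and>
     (\<forall>i w. cap M i w =
        \<Union>{rimp M \<phi> \<psi> | \<phi> \<psi>. w \<in> tr M (Cap i (PImp \<phi> \<psi>))} \<union>
        \<Union>{ra M a | a. w \<in> tr M (Cap i (Atomic a))})"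

definition valid :: "'s itself \<Rightarrow> ('p,'a,'i) form \<Rightarrow> bool" where
  "valid (_ :: 's itself) \<phi> \<longleftrightarrow>
     (\<forall>M :: ('s,'p,'a,'i) model. Lmodel M \<longrightarrow> (\<forall>w. w \<in> tr M \<phi>))"

inductive alpha1 :: "('p,'a,'i) form \<Rightarrow> ('p,'a,'i) form \<Rightarrow> bool" where
  "alpha1 (Neg (Neg \<phi>)) \<phi>"
| "alpha1 (Box (Seq A B) \<phi>) (Box A (Box B \<phi>))"
| "alpha1 (Neg (Box (Seq A B) \<phi>)) (Neg (Box A (Box B \<phi>)))"
| "alpha1 (Cap i (Star A)) (Box (Star A) (Cap i A))"
| "alpha1 (Neg (Cap i (Star A))) (Neg (Box (Star A) (Cap i A)))"

inductive alpha2 :: "('p,'a,'i) form \<Rightarrow> ('p,'a,'i) form \<Rightarrow> ('p,'a,'i) form \<Rightarrow> bool" where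
  "alpha2 (Neg (Box (Test \<psi>) \<phi>)) (Neg \<phi>) \<psi>"
| "alpha2 (Box (Choice A B) \<phi>) (Box A \<phi>) (Box B \<phi>)"
| "alpha2 (Box (Star A) \<phi>) \<phi> (Box A (Box (Star A) \<phi>))"
| "alpha2 (Cap i (Seq A B)) (Cap i A) (Box A (Cap i B))"
| "alpha2 (Cap i (Choice A B)) (Cap i A) (Cap i B)"

inductive beta :: "('p,'a,'i) form \<Rightarrow> ('p,'a,'i) form \<Rightarrow> ('p,'a,'i) form \<Rightarrow> bool" where
  "beta (Box (Test \<psi>) \<phi>) (Neg \<psi>) \<phi>"
| "beta (Box (PImp \<phi> \<psi>) \<theta>)
        (Conj \<phi> (Box (Star Omega) (Box (Test \<psi>) \<theta>))) (Box (Star Omega) \<theta>)"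
| "beta (Neg (Box (PImp \<phi> \<psi>) \<theta>))
        (Neg (Box (Test (Neg \<phi>)) (Box Omega \<theta>))) (Neg (Box Omega (Box (Test \<psi>) \<theta>)))"
| "beta (Neg (Box (Choice A B) \<phi>)) (Neg (Box A \<phi>)) (Neg (Box B \<phi>))"
| "beta (Neg (Box (Star A) \<phi>)) (Neg \<phi>) (Neg (Box A (Box (Star A) \<phi>)))"
| "beta (Neg (Cap i (Seq A B))) (Neg (Cap i A)) (Neg (Box A (Cap i B)))"
| "beta (Neg (Cap i (Choice A B))) (Neg (Cap i A)) (Neg (Cap i B))"

end

theory Submission
  imports Defs
begin

context
  fixes M :: "('s,'p,'a,'i) model"
  assumes L: "Lmodel M"
begin

lemmas LL = L[unfolded Lmodel_def]

lemma trN[simp]: "tr M (Neg \<phi>) = - tr M \<phi>" using LL by (elim conjE allE)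
lemma trB[simp]: "tr M (Box A \<phi>) = {w. \<forall>v. (w, v) \<in> rel M A \<longrightarrow> v \<in> tr M \<phi>}"
  using LL by (elim conjE allE)
lemma trC[simp]: "tr M (Cap i A) = capsem M i A" using LL by (elim conjE allE)
lemma rimpE: "rimp M \<phi> \<psi> = \<Union>{rel M A | A. A \<in> sigma_plus \<and> safe M \<phi> \<psi> A}"
  using LL by (elim conjE allE)

lemma trConj[simp]: "tr M (Conj a b) = tr M a \<inter> tr M b" by (auto simp: Conj_def)
lemma trDisj[simp]: "tr M (Disj a b) = tr M a \<union> tr M b" by (auto simp: Disj_def)
lemma trImpl[simp]: "tr M (Impl a b) = - tr M a \<union> tr M b" by (auto simp: Impl_def)
lemma trtt[simp]: "tr M tt = UNIV" by (auto simp: tt_def)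

lemma relOmega: "rel M Omega = {(w,v). \<exists>A\<in>sigma_plus. (w,v) \<in> rel M A}"
  by (auto simp: Omega_def rimpE safe_def)

lemma relOmega_trans: "trans (rel M Omega)"
proof (rule transI)
  fix x y z assume "(x,y) \<in> rel M Omega" "(y,z) \<in> rel M Omega"
  then obtain A B where "A \<in> sigma_plus" "B \<in> sigma_plus" "(x,y) \<in> rel M A" "(y,z) \<in> rel M B"
    by (auto simp: relOmega)
  then show "(x,z) \<in> rel M Omega" unfolding relOmega
    by (auto intro!: bexI[of _ "Seq A B"] sigma_plus.sp_seq)
qed

lemma relOmega_refl: "(x,x) \<in> rel M Omega"
  unfolding relOmega by (auto intro!: bexI[of _ "Test tt"] sigma_plus.sp_test)

lemma relStarOmega[simp]: "rel M (Star Omega) = rel M Omega"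
proof -
  have "(rel M Omega)\<^sup>* \<subseteq> rel M Omega"
  proof (rule subrelI)
    fix x y assume "(x,y) \<in> (rel M Omega)\<^sup>*"
    then show "(x,y) \<in> rel M Omega"
    proof (induction rule: rtrancl_induct)
      case base then show ?case by (rule relOmega_refl)
    next
      case (step y z) then show ?case using relOmega_trans by (blast dest: transD)
    qed
  qed
  then show ?thesis by auto
qed

lemma cap_star: "capsem M i (Star A) = tr M (Box (Star A) (Cap i A))"
proof
  show "capsem M i (Star A) \<subseteq> tr M (Box (Star A) (Cap i A))"
  proof
    fix w assume "w \<in> capsem M i (Star A)"
    then obtain \<phi> where w: "w \<in> tr M \<phi>" and sub: "tr M \<phi> \<subseteq> capsem M i A \<inter> tr M (Box A \<phi>)"
      by auto
    have "\<forall>v. (w,v) \<in> (rel M A)\<^sup>* \<longrightarrow> v \<in> tr M \<phi>"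
    proof (intro allI impI)
      fix v assume "(w,v) \<in> (rel M A)\<^sup>*"
      then show "v \<in> tr M \<phi>"
        by (induction rule: rtrancl_induct) (use w sub in auto)
    qed
    then show "w \<in> tr M (Box (Star A) (Cap i A))" using sub by auto
  qed
next
  show "tr M (Box (Star A) (Cap i A)) \<subseteq> capsem M i (Star A)"
  proof
    fix w assume w: "w \<in> tr M (Box (Star A) (Cap i A))"
    have "tr M (Box (Star A) (Cap i A)) \<subseteq> capsem M i A \<inter> tr M (Box A (Box (Star A) (Cap i A)))"
      by (auto intro: converse_rtrancl_into_rtrancl)
    then show "w \<in> capsem M i (Star A)" using w
      by (simp only: capsem.simps) blast
  qed
qed

lemma pimp_main: "tr M (Box (PImp \<phi> \<psi>) \<theta>) =
   (tr M \<phi> \<inter> {w. \<forall>v. (w,v) \<in> rel M Omega \<longrightarrow> v \<in> tr M \<psi> \<longrightarrow> v \<in> tr M \<theta>})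
   \<union> {w. \<forall>v. (w,v) \<in> rel M Omega \<longrightarrow> v \<in> tr M \<theta>}"
proof (intro equalityI subsetI)
  fix w assume w: "w \<in> tr M (Box (PImp \<phi> \<psi>) \<theta>)"
  show "w \<in> (tr M \<phi> \<inter> {w. \<forall>v. (w,v) \<in> rel M Omega \<longrightarrow> v \<in> tr M \<psi> \<longrightarrow> v \<in> tr M \<theta>})
   \<union> {w. \<forall>v. (w,v) \<in> rel M Omega \<longrightarrow> v \<in> tr M \<theta>}"
  proof (cases "w \<in> tr M \<phi>")
    case True
    have "v \<in> tr M \<theta>" if "(w,v) \<in> rel M Omega" "v \<in> tr M \<psi>" for v
    proof -
      from that obtain B where B: "B \<in> sigma_plus" "(w,v) \<in> rel M B" by (auto simp: relOmega)
      have "Seq B (Test \<psi>) \<in> sigma_plus" using B by (auto intro: sigma_plus.intros)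
      moreover have "safe M \<phi> \<psi> (Seq B (Test \<psi>))" by (auto simp: safe_def)
      moreover have "(w,v) \<in> rel M (Seq B (Test \<psi>))" using B that by auto
      ultimately have "(w,v) \<in> rimp M \<phi> \<psi>" unfolding rimpE by blast
      then show ?thesis using w by auto
    qed
    then show ?thesis using True by auto
  next
    case False
    have "v \<in> tr M \<theta>" if "(w,v) \<in> rel M Omega" for v
    proof -
      from that obtain B where B: "B \<in> sigma_plus" "(w,v) \<in> rel M B" by (auto simp: relOmega)
      have "Seq (Test (Neg \<phi>)) B \<in> sigma_plus" using B by (auto intro: sigma_plus.intros)
      moreover have "safe M \<phi> \<psi> (Seq (Test (Neg \<phi>)) B)" by (auto simp: safe_def)
      moreover have "(w,v) \<in> rel M (Seq (Test (Neg \<phi>)) B)" using B False by auto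
      ultimately have "(w,v) \<in> rimp M \<phi> \<psi>" unfolding rimpE by blast
      then show ?thesis using w by auto
    qed
    then show ?thesis by auto
  qed
next
  fix w assume w: "w \<in> (tr M \<phi> \<inter> {w. \<forall>v. (w,v) \<in> rel M Omega \<longrightarrow> v \<in> tr M \<psi> \<longrightarrow> v \<in> tr M \<theta>})
   \<union> {w. \<forall>v. (w,v) \<in> rel M Omega \<longrightarrow> v \<in> tr M \<theta>}"
  show "w \<in> tr M (Box (PImp \<phi> \<psi>) \<theta>)"
  proof (simp, intro allI impI)
    fix v assume "(w,v) \<in> rimp M \<phi> \<psi>"
    then obtain A where A: "A \<in> sigma_plus" "safe M \<phi> \<psi> A" "(w,v) \<in> rel M A"
      unfolding rimpE by blast
    then have om: "(w,v) \<in> rel M Omega" by (auto simp: relOmega)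
    show "v \<in> tr M \<theta>" using w om A by (auto simp: safe_def)
  qed
qed


lemma a1_1: "tr M (Neg (Neg \<phi>)) = tr M \<phi>" by simp
lemma a1_2: "tr M (Box (Seq A B) \<phi>) = tr M (Box A (Box B \<phi>))" by auto
lemma a1_3: "tr M (Neg (Box (Seq A B) \<phi>)) = tr M (Neg (Box A (Box B \<phi>)))" using a1_2 by simp
lemma a1_4: "tr M (Cap i (Star A)) = tr M (Box (Star A) (Cap i A))" by (simp only: trC cap_star)
lemma a1_5: "tr M (Neg (Cap i (Star A))) = tr M (Neg (Box (Star A) (Cap i A)))" using a1_4 by simp

lemma a2_1: "tr M (Neg (Box (Test \<psi>) \<phi>)) = tr M (Conj (Neg \<phi>) \<psi>)" by auto
lemma a2_2: "tr M (Box (Choice A B) \<phi>) = tr M (Conj (Box A \<phi>) (Box B \<phi>))" by auto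
lemma a2_3: "tr M (Box (Star A) \<phi>) = tr M (Conj \<phi> (Box A (Box (Star A) \<phi>)))"
  by (auto intro: converse_rtrancl_into_rtrancl elim: converse_rtranclE)
lemma a2_4: "tr M (Cap i (Seq A B)) = tr M (Conj (Cap i A) (Box A (Cap i B)))" by auto
lemma a2_5: "tr M (Cap i (Choice A B)) = tr M (Conj (Cap i A) (Cap i B))" by auto

lemma b_1: "tr M (Box (Test \<psi>) \<phi>) = tr M (Disj (Neg \<psi>) \<phi>)" by auto
lemma b_2: "tr M (Box (PImp \<phi> \<psi>) \<theta>) = tr M (Disj (Conj \<phi> (Box (Star Omega) (Box (Test \<psi>) \<theta>))) (Box (Star Omega) \<theta>))"
  unfolding pimp_main by (simp only: trDisj trConj relStarOmega trB rel.simps(2)) blast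
lemma b_3: "tr M (Neg (Box (PImp \<phi> \<psi>) \<theta>)) = tr M (Disj (Neg (Box (Test (Neg \<phi>)) (Box Omega \<theta>))) (Neg (Box Omega (Box (Test \<psi>) \<theta>))))"
  unfolding trN pimp_main by (simp only: trDisj trN trB rel.simps(2)) blast
lemma b_4: "tr M (Neg (Box (Choice A B) \<phi>)) = tr M (Disj (Neg (Box A \<phi>)) (Neg (Box B \<phi>)))" by auto
lemma b_5: "tr M (Neg (Box (Star A) \<phi>)) = tr M (Disj (Neg \<phi>) (Neg (Box A (Box (Star A) \<phi>))))"
  by (subst trN, subst a2_3, simp only: trConj trDisj trN Compl_Int)
lemma b_6: "tr M (Neg (Cap i (Seq A B))) = tr M (Disj (Neg (Cap i A)) (Neg (Box A (Cap i B))))" by auto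
lemma b_7: "tr M (Neg (Cap i (Choice A B))) = tr M (Disj (Neg (Cap i A)) (Neg (Cap i B)))" by auto

end

lemma valid_Iff: "(\<And>M :: ('s,'p,'a,'i) model. Lmodel M \<Longrightarrow> tr M a = tr M b) \<Longrightarrow> valid TYPE('s) (Iff a b)"
  unfolding valid_def Iff_def by auto

theorem mainTheorem6:
  fixes \<alpha> \<alpha>\<^sub>1 \<alpha>\<^sub>2 \<beta> \<beta>\<^sub>1 \<beta>\<^sub>2 :: "('p,'a,'i) form"
  shows "(alpha1 \<alpha> \<alpha>\<^sub>1 \<longrightarrow> valid TYPE('s) (Iff \<alpha> \<alpha>\<^sub>1))
       \<and> (alpha2 \<alpha> \<alpha>\<^sub>1 \<alpha>\<^sub>2 \<longrightarrow> valid TYPE('s) (Iff \<alpha> (Conj \<alpha>\<^sub>1 \<alpha>\<^sub>2)))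
       \<and> (beta \<beta> \<beta>\<^sub>1 \<beta>\<^sub>2 \<longrightarrow> valid TYPE('s) (Iff \<beta> (Disj \<beta>\<^sub>1 \<beta>\<^sub>2)))"
proof (intro conjI impI)
  assume "alpha1 \<alpha> \<alpha>\<^sub>1"
  then show "valid TYPE('s) (Iff \<alpha> \<alpha>\<^sub>1)"
    by cases (intro valid_Iff; simp only: a1_1 a1_2 a1_3 a1_4 a1_5)+
next
  assume "alpha2 \<alpha> \<alpha>\<^sub>1 \<alpha>\<^sub>2"
  then show "valid TYPE('s) (Iff \<alpha> (Conj \<alpha>\<^sub>1 \<alpha>\<^sub>2))"
    by cases (intro valid_Iff; simp only: a2_1 a2_2 a2_3 a2_4 a2_5)+
next
  assume "beta \<beta> \<beta>\<^sub>1 \<beta>\<^sub>2"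
  then show "valid TYPE('s) (Iff \<beta> (Disj \<beta>\<^sub>1 \<beta>\<^sub>2))"
    by cases (intro valid_Iff; simp only: b_1 b_2 b_3 b_4 b_5 b_6 b_7)+
qed

end
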